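(* Let $\lambda>0$, $\Sigma\in\mathbb{R}^{d\times d}$ symmetric positive definite, and $\mathcal{R}_{\mathrm{soft},\infty}(\mu)=\operatorname{tr}(\Sigma)-2\lambda\mu^\top\Sigma^2\mu+\lambda^2(\mu^\top\Sigma\mu)(\mu^\top\Sigma^2\mu)$. The function $\mathcal{R}_{\mathrm{soft},\infty}$ is coercive, and for any $\mu_0\in\mathbb{R}^d$ the solution $\mu_\infty$ of $\dot\mu_\infty=-\nabla\mathcal{R}_{\mathrm{soft},\infty}(\mu_\infty)$, $\mu_\infty(0)=\mu_0$, is bounded: there exists $\rho\ge\|\mu_0\|$ such that \[ \{\mu_\infty(t):t\ge0\}\subset\{\mu\in\mathbb{R}^d:\mathcal{R}_{\mathrm{soft},\infty}(\mu)\le\mathcal{R}_{\mathrm{soft},\infty}(\mu_0)\}\subset B(0,\rho). \]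
   Context: $B(0,\rho)$ is the closed ball of radius $\rho$ centered at $0$. *)

theory Defs
  imports "HOL-Analysis.Analysis"
begin

definition R_soft_inf :: "real \<Rightarrow> real^'d^'d \<Rightarrow> real^'d \<Rightarrow> real" where
  "R_soft_inf lam S mu =
     trace S - 2 * lam * (mu \<bullet> ((S ** S) *v mu))
     + lam^2 * (mu \<bullet> (S *v mu)) * (mu \<bullet> ((S ** S) *v mu))"

end

theory Submission
  imports Defs
begin

lemma sq_form:
  fixes S :: "real^'d^'d" and x :: "real^'d"
  assumes sym: "transpose S = S"
  shows "x \<bullet> ((S ** S) *v x) = (S *v x) \<bullet> (S *v x)"
proof -
  have "x \<bullet> ((S ** S) *v x) = x \<bullet> (S *v (S *v x))" by (simp add: matrix_vector_mul_assoc)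
  also have "\<dots> = (x v* S) \<bullet> (S *v x)" by (simp add: dot_lmul_matrix)
  also have "x v* S = S *v x" by (metis sym transpose_matrix_vector)
  finally show ?thesis .
qed

lemma posdef_const:
  fixes S :: "real^'d^'d"
  assumes posdef: "\<And>x. x \<noteq> 0 \<Longrightarrow> x \<bullet> (S *v x) > 0"
  shows "\<exists>c>0. \<forall>x. c * norm x ^ 2 \<le> x \<bullet> (S *v x)"
proof -
  let ?q = "\<lambda>x::real^'d. x \<bullet> (S *v x)"
  have cont: "continuous_on (sphere 0 1) ?q"
    by (intro continuous_intros linear_continuous_on matrix_vector_mul_linear bounded_linear_inner_right) 
  have ne: "sphere (0::real^'d) 1 \<noteq> {}" by simp
  obtain u where u: "u \<in> sphere 0 1" "\<And>y. y \<in> sphere 0 1 \<Longrightarrow> ?q u \<le> ?q y"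
    using continuous_attains_inf[OF compact_sphere ne cont] by blast
  have upos: "?q u > 0" using u(1) posdef by (metis norm_zero mem_sphere_0 zero_neq_one)
  have "\<forall>x. ?q u * norm x ^ 2 \<le> ?q x"
  proof
    fix x :: "real^'d"
    show "?q u * norm x ^ 2 \<le> ?q x"
    proof (cases "x = 0")
      case True then show ?thesis by simp
    next
      case False
      define y where "y = (1 / norm x) *\<^sub>R x"
      have "y \<in> sphere 0 1" using False by (simp add: y_def)
      then have "?q u \<le> ?q y" using u(2) by blast
      also have "?q y = ?q x / norm x ^ 2"
        by (simp add: y_def matrix_vector_mult_scaleR power2_eq_square)
      finally show ?thesis using False by (simp add: field_simps)
    qed
  qed
  then show ?thesis using upos by blast
qed

lemma aux_ineq: "2 * A \<le> (X::real) \<Longrightarrow> X \<le> Y \<Longrightarrow> W \<le> A \<Longrightarrow> W \<le> Y / 2"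
  by linarith

lemma R_lower:
  fixes S :: "real^'d^'d" and x :: "real^'d"
  assumes lam: "lam > 0" and sym: "transpose S = S" and c: "c > 0"
    and cq: "\<And>x. c * norm x ^ 2 \<le> x \<bullet> (S *v x)"
    and big: "lam * c * norm x ^ 2 \<ge> 4"
  shows "R_soft_inf lam S x \<ge> trace S + lam^2 * c^3 * norm x ^ 4 / 2"
proof -
  define r where "r = norm x"
  define a where "a = (S *v x) \<bullet> (S *v x)"
  define b where "b = x \<bullet> (S *v x)"
  have R: "R_soft_inf lam S x = trace S + a * (lam^2 * b - 2 * lam)"
    unfolding R_soft_inf_def a_def b_def sq_form[OF sym] by (simp add: algebra_simps)
  have br: "b \<ge> c * r^2" using cq unfolding b_def r_def by blast
  have "b \<le> r * norm (S *v x)" unfolding b_def r_def by (rule norm_cauchy_schwarz)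
  with br have "c * r^2 \<le> r * norm (S *v x)" by linarith
  moreover have r0: "r \<ge> 0" by (simp add: r_def)
  ultimately have "c * r \<le> norm (S *v x)"
    by (cases "r = 0") (auto simp: power2_eq_square mult.assoc mult_le_cancel_left)
  then have "(c*r)^2 \<le> norm (S *v x) ^2" using c r0 by (intro power_mono) auto
  then have ar: "a \<ge> c^2 * r^2" by (simp add: a_def power2_norm_eq_inner power_mult_distrib)
  have "lam^2 * b - 2 * lam \<ge> lam^2 * (c*r^2) - 2*lam"
    using br lam by (simp add: mult_left_mono)
  moreover have "lam * c * r^2 \<ge> 4" using big r_def by simp
  moreover have "lam * (lam * c * r^2) \<ge> lam * 4" using \<open>lam * c * r^2 \<ge> 4\<close> lam by (simp add: mult_left_mono)
  ultimately have e: "lam^2 * b - 2 * lam \<ge> lam^2 * c * r^2 / 2"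
    by (simp add: power2_eq_square algebra_simps)
  have "a * (lam^2 * b - 2 * lam) \<ge> (c^2*r^2) * (lam^2 * c * r^2 / 2)"
    apply (rule mult_mono[OF ar e])
    using c lam by (auto simp: a_def)
  also have "(c^2*r^2) * (lam^2 * c * r^2 / 2) = lam^2 * c^3 * r^4 / 2"
    by (simp add: power2_eq_square power3_eq_cube power4_eq_xxxx)
  finally show ?thesis unfolding R r_def by linarith
qed

theorem lemma1:
  fixes lam :: real and S :: "real^'d^'d"
  assumes lam_pos: "lam > 0"
    and sym: "transpose S = S"
    and posdef: "\<And>x. x \<noteq> 0 \<Longrightarrow> x \<bullet> (S *v x) > 0"
  shows "filterlim (R_soft_inf lam S) at_top at_infinity \<and>
    (\<forall>(G :: real^'d \<Rightarrow> real^'d) (mu0 :: real^'d) (mu :: real \<Rightarrow> real^'d).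
       (\<forall>x. (R_soft_inf lam S has_derivative (\<lambda>h. G x \<bullet> h)) (at x)) \<and>
       mu 0 = mu0 \<and>
       (\<forall>t\<ge>0. (mu has_vector_derivative (- G (mu t))) (at t within {0..}))
       \<longrightarrow> (\<exists>\<rho>\<ge>norm mu0.
             mu ` {0..} \<subseteq> {x. R_soft_inf lam S x \<le> R_soft_inf lam S mu0} \<and>
             {x. R_soft_inf lam S x \<le> R_soft_inf lam S mu0} \<subseteq> cball 0 \<rho>))"
proof -
  obtain c where c: "c > 0" "\<And>x. c * norm x ^ 2 \<le> x \<bullet> (S *v x)"
    using posdef_const[OF posdef] by blast
  note low = R_lower[OF lam_pos sym c(1) c(2)]
  have ev: "\<exists>B. \<forall>x. B \<le> norm x \<longrightarrow> Z \<le> R_soft_inf lam S x" for Z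
  proof -
    define B where "B = max 1 (max (4 / (lam * c)) (2 * \<bar>Z - trace S\<bar> / (lam^2 * c^3)))"
    have "Z \<le> R_soft_inf lam S x" if "B \<le> norm x" for x
    proof -
      define r where "r = norm x"
      have r1: "r \<ge> 1" and r2: "r \<ge> 4 / (lam * c)" and r3: "r \<ge> 2 * \<bar>Z - trace S\<bar> / (lam^2 * c^3)"
        using that unfolding B_def r_def by auto
      have "r^2 \<ge> r" using r1 by (simp add: power2_eq_square)
      have lc: "lam * c > 0" using lam_pos c by simp
      have "lam * c * r \<ge> 4" using r2 lc by (simp add: field_simps)
      moreover have "r^2 \<ge> r" using r1 by (simp add: power2_eq_square)
      ultimately have "lam * c * r^2 \<ge> 4" using lc
        by (smt (verit) mult_left_mono)
      then have L: "R_soft_inf lam S x \<ge> trace S + lam^2 * c^3 * r ^ 4 / 2"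
        using low r_def by blast
      have "r^4 \<ge> r" using r1
        by (metis power_one_right power_increasing le_numeral_extra(4) one_le_numeral zero_less_one order_trans less_imp_le one_add_one numeral_le_iff semiring_norm(69) le_add2 power_increasing_iff nat_le_linear numeral_One)
      have lc3: "lam^2 * c^3 > 0" using lam_pos c by simp
      have "lam^2 * c^3 * r \<ge> 2 * \<bar>Z - trace S\<bar>" using r3 lc3 by (simp add: field_simps)
      moreover have "lam^2 * c^3 * r^4 \<ge> lam^2 * c^3 * r" using \<open>r^4 \<ge> r\<close> lc3 by (simp add: mult_left_mono less_imp_le)
      ultimately have "Z - trace S \<le> lam^2 * c^3 * r ^ 4 / 2"
        using abs_ge_self[of "Z - trace S"] by (metis (no_types) aux_ineq)
      then show ?thesis using L by linarith
    qed
    then show ?thesis by blast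
  qed
  have coer: "filterlim (R_soft_inf lam S) at_top at_infinity"
    unfolding filterlim_at_top eventually_at_infinity using ev by blast
  show ?thesis
  proof (intro conjI coer allI impI)
    fix G :: "real^'d \<Rightarrow> real^'d" and mu0 :: "real^'d" and mu :: "real \<Rightarrow> real^'d"
    assume H: "(\<forall>x. (R_soft_inf lam S has_derivative (\<lambda>h. G x \<bullet> h)) (at x)) \<and>
       mu 0 = mu0 \<and>
       (\<forall>t\<ge>0. (mu has_vector_derivative (- G (mu t))) (at t within {0..}))"
    have dR: "\<And>x. (R_soft_inf lam S has_derivative (\<lambda>h. G x \<bullet> h)) (at x)" using H by blast
    have m0: "mu 0 = mu0" using H by blast
    have dmu: "\<And>t. t \<ge> 0 \<Longrightarrow> (mu has_vector_derivative (- G (mu t))) (at t within {0..})" using H by blast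
    have dec: "R_soft_inf lam S (mu t) \<le> R_soft_inf lam S mu0" if t: "t \<ge> 0" for t
    proof -
      have "(R_soft_inf lam S \<circ> mu has_derivative (\<lambda>h. G (mu s) \<bullet> (h *\<^sub>R - G (mu s)))) (at s within {0..t})"
        if "0 \<le> s" "s \<le> t" for s
      proof -
        have d1: "(mu has_derivative (\<lambda>h. h *\<^sub>R - G (mu s))) (at s within {0..t})"
          using dmu[of s] that unfolding has_vector_derivative_def
          by (meson atLeastAtMost_iff has_derivative_subset atLeast_iff subsetI)
        have d2: "(R_soft_inf lam S has_derivative (\<lambda>h. G (mu s) \<bullet> h)) (at (mu s) within mu ` {0..t})"
          using dR has_derivative_at_withinI by blast
        show ?thesis using diff_chain_within[OF d1 d2] by (simp add: o_def)
      qed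
      from mvt_very_simple[OF t this]
      obtain s where "R_soft_inf lam S (mu t) - R_soft_inf lam S (mu 0) = G (mu s) \<bullet> ((t - 0) *\<^sub>R - G (mu s))"
        by auto
      moreover have "G (mu s) \<bullet> ((t - 0) *\<^sub>R - G (mu s)) = - t * (G (mu s) \<bullet> G (mu s))" by simp
      moreover have "t * (G (mu s) \<bullet> G (mu s)) \<ge> 0" using t by simp
      ultimately show ?thesis using m0 by simp
    qed
    obtain B where B: "\<And>x. B \<le> norm x \<Longrightarrow> R_soft_inf lam S mu0 + 1 \<le> R_soft_inf lam S x"
      using ev by blast
    show "\<exists>\<rho>\<ge>norm mu0. mu ` {0..} \<subseteq> {x. R_soft_inf lam S x \<le> R_soft_inf lam S mu0} \<and>
             {x. R_soft_inf lam S x \<le> R_soft_inf lam S mu0} \<subseteq> cball 0 \<rho>"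
    proof (intro exI[of _ "max B (norm mu0)"] conjI)
      show "mu ` {0..} \<subseteq> {x. R_soft_inf lam S x \<le> R_soft_inf lam S mu0}" using dec by auto
      show "{x. R_soft_inf lam S x \<le> R_soft_inf lam S mu0} \<subseteq> cball 0 (max B (norm mu0))"
      proof
        fix x assume "x \<in> {x. R_soft_inf lam S x \<le> R_soft_inf lam S mu0}"
        then have "\<not> B \<le> norm x" using B by force
        then show "x \<in> cball 0 (max B (norm mu0))" by simp
      qed
    qed simp
  qed
qed

end
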